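(* A relaxed binary tree $C$ is a compacted binary tree if and only if there are no two distinct vertices $u\neq v$ of $C$ having the same left out-neighbour and the same right out-neighbour. Moreover, if $C$ is not a compacted tree, then such a pair $(u,v)$ exists in which $v$ is a cherry and $u$ precedes $v$ in postorder.
   Context: A (rooted, plane) binary tree is either a leaf or an internal node with an ordered pair (left, right) of binary subtrees; postorder visits left subtree, right subtree, then root. A relaxed binary tree of size $n$ is obtained from a binary tree $T$ with $n$ internal nodes (its spine) by keeping the left-most leaf and turning every other leaf $\ell$ into a pointer to a vertex of $T$ which is an internal node or the left-most leaf and which precedes $\ell$ in postorder. It is regarded as a directed acyclic graph whose vertices are the internal nodes of $T$ and the left-most leaf; each internal node has a left and a right out-edge, going to the corresponding child in $T$ if that child is an internal node or the left-most leaf, and otherwise to the target of the pointer replacing that child (the endpoints of these edges are the left and right out-neighbours, or children, of the node in $C$). For each vertex $u$ define a binary tree $B(u)$: a single leaf if $u$ is the left-most leaf, otherwise the binary tree with left subtree $B(v)$ and right subtree $B(w)$, where $v,w$ are the left and right out-neighbours of $u$. A compacted binary tree is a relaxed binary tree with $B(u)$ not isomorphic to $B(v)$ for all distinct vertices $u\ne v$. An internal node is a cherry if both of its children in the spine $T$ are leaves and neither of them is the left-most leaf. *)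

theory Defs
  imports Main
begin

text \<open>Plane binary trees (used both for the spine T and for the trees B(u)).\<close>
datatype bt = Leaf | Node bt bt

text \<open>Positions in a tree are paths from the root: False = go left, True = go right.\<close>
type_synonym pos = "bool list"

fun subt :: "bt \<Rightarrow> pos \<Rightarrow> bt option" where
  "subt t [] = Some t"
| "subt Leaf (_ # _) = None"
| "subt (Node l r) (b # p) = subt (if b then r else l) p"

fun postorder :: "bt \<Rightarrow> pos list" where
  "postorder Leaf = [[]]"
| "postorder (Node l r) = map (Cons False) (postorder l) @ map (Cons True) (postorder r) @ [[]]"

definition precedes :: "bt \<Rightarrow> pos \<Rightarrow> pos \<Rightarrow> bool" where
  "precedes T a b \<longleftrightarrow> (\<exists>i j. i < j \<and> j < length (postorder T) \<and>
      postorder T ! i = a \<and> postorder T ! j = b)"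

definition is_internal :: "bt \<Rightarrow> pos \<Rightarrow> bool" where
  "is_internal T p \<longleftrightarrow> (\<exists>l r. subt T p = Some (Node l r))"

definition is_leaf :: "bt \<Rightarrow> pos \<Rightarrow> bool" where
  "is_leaf T p \<longleftrightarrow> subt T p = Some Leaf"

definition leftmost :: "bt \<Rightarrow> pos" where
  "leftmost T = hd (postorder T)"

definition is_vertex :: "bt \<Rightarrow> pos \<Rightarrow> bool" where
  "is_vertex T p \<longleftrightarrow> is_internal T p \<or> p = leftmost T"

text \<open>A relaxed binary tree is given by its spine T and a pointer function ptr, which
  maps every leaf other than the left-most one to a vertex preceding it in postorder.
  (Values of ptr at other positions are irrelevant.)\<close>
definition relaxed :: "bt \<Rightarrow> (pos \<Rightarrow> pos) \<Rightarrow> bool" where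
  "relaxed T ptr \<longleftrightarrow> (\<forall>l. is_leaf T l \<and> l \<noteq> leftmost T \<longrightarrow>
      is_vertex T (ptr l) \<and> precedes T (ptr l) l)"

text \<open>Out-neighbour of an internal node u in direction b (False = left, True = right).\<close>
definition child :: "bt \<Rightarrow> (pos \<Rightarrow> pos) \<Rightarrow> pos \<Rightarrow> bool \<Rightarrow> pos" where
  "child T ptr u b = (let c = u @ [b] in if is_vertex T c then c else ptr c)"

abbreviation lchild where "lchild T ptr u \<equiv> child T ptr u False"
abbreviation rchild where "rchild T ptr u \<equiv> child T ptr u True"

text \<open>B(u), as the relation "B(u) = t" (it is a total function on vertices of a relaxed tree).\<close>
inductive Btree :: "bt \<Rightarrow> (pos \<Rightarrow> pos) \<Rightarrow> pos \<Rightarrow> bt \<Rightarrow> bool" for T ptr where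
  B_leaf: "Btree T ptr (leftmost T) Leaf"
| B_node: "is_internal T u \<Longrightarrow> Btree T ptr (lchild T ptr u) a \<Longrightarrow> Btree T ptr (rchild T ptr u) b
           \<Longrightarrow> Btree T ptr u (Node a b)"

definition compacted :: "bt \<Rightarrow> (pos \<Rightarrow> pos) \<Rightarrow> bool" where
  "compacted T ptr \<longleftrightarrow> relaxed T ptr \<and>
     (\<forall>u v. is_vertex T u \<and> is_vertex T v \<and> u \<noteq> v \<longrightarrow>
        (\<forall>a b. Btree T ptr u a \<and> Btree T ptr v b \<longrightarrow> a \<noteq> b))"

definition cherry :: "bt \<Rightarrow> pos \<Rightarrow> bool" where
  "cherry T v \<longleftrightarrow> subt T v = Some (Node Leaf Leaf) \<and>
      v @ [False] \<noteq> leftmost T \<and> v @ [True] \<noteq> leftmost T"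

end

theory Submission imports Defs begin

fun P :: "'a list \<Rightarrow> 'a \<Rightarrow> 'a \<Rightarrow> bool" where
  "P [] a b = False"
| "P (x#xs) a b = ((x = a \<and> b \<in> set xs) \<or> P xs a b)"

lemma P_iff: "P xs a b \<longleftrightarrow> (\<exists>i j. i < j \<and> j < length xs \<and> xs!i = a \<and> xs!j = b)"
proof (induction xs)
  case Nil then show ?case by simp
next
  case (Cons x xs)
  show ?case
  proof
    assume "P (x#xs) a b"
    then consider "x = a" "b \<in> set xs" | "P xs a b" by auto
    then show "\<exists>i j. i < j \<and> j < length (x#xs) \<and> (x#xs)!i = a \<and> (x#xs)!j = b"
    proof cases
      case 1
      then obtain j where "j < length xs" "xs!j = b" by (auto simp: in_set_conv_nth)
      then show ?thesis using 1 by (intro exI[of _ 0] exI[of _ "Suc j"]) auto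
    next
      case 2
      then obtain i j where "i < j \<and> j < length xs \<and> xs!i = a \<and> xs!j = b" using Cons by auto
      then show ?thesis by (intro exI[of _ "Suc i"] exI[of _ "Suc j"]) auto
    qed
  next
    assume "\<exists>i j. i < j \<and> j < length (x#xs) \<and> (x#xs)!i = a \<and> (x#xs)!j = b"
    then obtain i j where ij: "i < j" "j < length (x#xs)" "(x#xs)!i = a" "(x#xs)!j = b" by blast
    then obtain j' where j': "j = Suc j'" by (cases j) auto
    show "P (x#xs) a b"
    proof (cases i)
      case 0
      then show ?thesis using ij j' by auto
    next
      case (Suc i')
      then have "P xs a b" using Cons ij j' by auto
      then show ?thesis by simp
    qed
  qed
qed

lemma P_append: "P (xs@ys) a b \<longleftrightarrow> P xs a b \<or> P ys a b \<or> (a \<in> set xs \<and> b \<in> set ys)"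
  by (induction xs) auto

lemma P_map: "inj f \<Longrightarrow> P (map f xs) a b \<longleftrightarrow> (\<exists>a' b'. a = f a' \<and> b = f b' \<and> P xs a' b')"
  by (induction xs) (auto simp: inj_eq)

fun po :: "pos \<Rightarrow> pos \<Rightarrow> bool" where
  "po [] b = False"
| "po (x#a) [] = True"
| "po (x#a) (y#b) = (if x = y then po a b else (\<not>x \<and> y))"

lemma set_postorder: "set (postorder T) = {p. subt T p \<noteq> None}"
proof (induction T)
  case Leaf
  then show ?case by (auto elim: subt.elims)
next
  case (Node l r)
  show ?case
  proof (rule set_eqI)
    fix p show "p \<in> set (postorder (Node l r)) \<longleftrightarrow> p \<in> {p. subt (Node l r) p \<noteq> None}"
      using Node by (cases p) auto
  qed
qed

lemma prec_char: "P (postorder T) a b \<longleftrightarrow> subt T a \<noteq> None \<and> subt T b \<noteq> None \<and> po a b"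
proof (induction T arbitrary: a b)
  case Leaf
  then show ?case by (cases a; cases b) auto
next
  case (Node l r)
  have inj: "inj (Cons x)" for x :: bool by (auto simp: inj_def)
  show ?case
    apply (simp add: P_append P_map[OF inj] set_postorder)
    apply (cases a; cases b)
    using Node by auto
qed

lemma precedes_iff: "precedes T a b \<longleftrightarrow> subt T a \<noteq> None \<and> subt T b \<noteq> None \<and> po a b"
  unfolding precedes_def P_iff[symmetric] prec_char ..

lemma po_irrefl: "\<not> po a a"
  by (induction a) auto

lemma po_trans: "po a b \<Longrightarrow> po b c \<Longrightarrow> po a c"
proof (induction a arbitrary: b c)
  case Nil then show ?case by simp
next
  case (Cons x a)
  then show ?case
    by (cases b; cases c) (auto split: if_splits)
qed

lemma po_total: "a \<noteq> b \<Longrightarrow> po a b \<or> po b a"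
proof (induction a arbitrary: b)
  case Nil then show ?case by (cases b) auto
next
  case (Cons x a)
  then show ?case by (cases b) auto
qed

lemma po_append: "q \<noteq> [] \<Longrightarrow> po (a@q) a"
  by (induction a) (auto simp: neq_Nil_conv)

lemma po_L3: "po (v@[False]) x \<Longrightarrow> po x v \<Longrightarrow> \<exists>q. x = v@True#q"
proof (induction v arbitrary: x)
  case Nil then show ?case by (cases x) (auto split: if_splits)
next
  case (Cons c v)
  then show ?case by (cases x) (auto split: if_splits)
qed

lemma po_L4: "po (v@[True]) x \<Longrightarrow> po x v \<Longrightarrow> False"
proof (induction v arbitrary: x)
  case Nil then show ?case by (cases x) (auto split: if_splits)
next
  case (Cons c v)
  then show ?case by (cases x) (auto split: if_splits)
qed

lemma subt_append: "subt T (p@q) = (case subt T p of None \<Rightarrow> None | Some t \<Rightarrow> subt t q)"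
proof (induction p arbitrary: T)
  case Nil then show ?case by simp
next
  case (Cons b p) then show ?case by (cases T) auto
qed


lemma internal_valid_child: "is_internal T u \<Longrightarrow> subt T (u@[b]) \<noteq> None"
  by (auto simp: is_internal_def subt_append)

lemma valid_not_internal_leaf: "subt T p \<noteq> None \<Longrightarrow> \<not> is_internal T p \<Longrightarrow> subt T p = Some Leaf"
  by (cases "subt T p") (auto simp: is_internal_def intro: bt.exhaust)

lemma prefix_internal: "subt T (a@q) \<noteq> None \<Longrightarrow> q \<noteq> [] \<Longrightarrow> is_internal T a"
  by (cases "subt T a"; cases q) (auto simp: subt_append is_internal_def elim: subt.elims)

lemma prefix_valid: "subt T (a@q) \<noteq> None \<Longrightarrow> subt T a \<noteq> None"
  by (auto simp: subt_append split: option.splits)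

lemma internal_valid: "is_internal T u \<Longrightarrow> subt T u \<noteq> None"
  by (auto simp: is_internal_def)

lemma child_cases:
  assumes "relaxed T ptr" "is_internal T u"
  shows "(child T ptr u b = u@[b] \<and> is_vertex T (u@[b])) \<or>
         (\<not> is_vertex T (u@[b]) \<and> child T ptr u b = ptr (u@[b]) \<and> precedes T (ptr (u@[b])) (u@[b])
           \<and> is_vertex T (ptr (u@[b])))"
proof (cases "is_vertex T (u@[b])")
  case True then show ?thesis by (simp add: child_def)
next
  case False
  then have "is_leaf T (u@[b])" "u@[b] \<noteq> leftmost T"
    using valid_not_internal_leaf[OF internal_valid_child[OF assms(2)]]
    by (auto simp: is_vertex_def is_leaf_def)
  then show ?thesis using False assms(1) by (simp add: child_def relaxed_def)
qed

lemma child_facts: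
  assumes "relaxed T ptr" "is_internal T u"
  shows "is_vertex T (child T ptr u b) \<and> precedes T (child T ptr u b) u"
proof -
  have cu: "precedes T (u@[b]) u"
    using internal_valid_child[OF assms(2)] internal_valid[OF assms(2)] po_append[of "[b]" u]
    by (simp add: precedes_iff)
  from child_cases[OF assms, of b] show ?thesis
  proof
    assume "child T ptr u b = u @ [b] \<and> is_vertex T (u @ [b])"
    then show ?thesis using cu by simp
  next
    assume h: "\<not> is_vertex T (u@[b]) \<and> child T ptr u b = ptr (u@[b]) \<and> precedes T (ptr (u@[b])) (u@[b])
           \<and> is_vertex T (ptr (u@[b]))"
    then show ?thesis using cu by (auto simp: precedes_iff intro: po_trans)
  qed
qed

lemma precedes_trans: "precedes T a b \<Longrightarrow> precedes T b c \<Longrightarrow> precedes T a c"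
  by (auto simp: precedes_iff intro: po_trans)

lemma precedes_irrefl: "\<not> precedes T a a"
  by (simp add: precedes_iff po_irrefl)

lemma wf_prec: "wf {(a,b). precedes T a b}"
proof (rule finite_acyclic_wf)
  have "{(a,b). precedes T a b} \<subseteq> set (postorder T) \<times> set (postorder T)"
    by (auto simp: precedes_iff set_postorder)
  then show "finite {(a,b). precedes T a b}" by (rule finite_subset) simp
  have "trans {(a,b). precedes T a b}" by (auto simp: trans_def intro: precedes_trans)
  then show "acyclic {(a,b). precedes T a b}"
    by (simp add: acyclic_def precedes_irrefl)
qed

lemma B_total:
  assumes "relaxed T ptr"
  shows "is_vertex T x \<Longrightarrow> \<exists>a. Btree T ptr x a"
proof (induction x rule: wf_induct_rule[OF wf_prec[of T]])
  case (1 x)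
  show ?case
  proof (cases "x = leftmost T")
    case True then show ?thesis using Btree.B_leaf by blast
  next
    case False
    then have int: "is_internal T x" using 1 by (simp add: is_vertex_def)
    obtain a where a: "Btree T ptr (lchild T ptr x) a" using 1 child_facts[OF assms int] by blast
    obtain b where b: "Btree T ptr (rchild T ptr x) b" using 1 child_facts[OF assms int] by blast
    show ?thesis using Btree.B_node[OF int a b] by blast
  qed
qed

lemma B_Node_inv: "Btree T ptr x (Node a b) \<Longrightarrow>
   is_internal T x \<and> Btree T ptr (lchild T ptr x) a \<and> Btree T ptr (rchild T ptr x) b"
  by (erule Btree.cases) auto

lemma B_Leaf_inv: "Btree T ptr x Leaf \<Longrightarrow> x = leftmost T"
  by (erule Btree.cases) auto


lemma sameB:
  assumes "Btree T ptr x c" "Btree T ptr y c" "x \<noteq> y"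
  shows "is_internal T x \<and> is_internal T y \<and> (precedes T x y \<or> precedes T y x)"
proof (cases c)
  case Leaf then show ?thesis using assms B_Leaf_inv by metis
next
  case (Node c1 c2)
  then have "is_internal T x" "is_internal T y" using assms B_Node_inv by metis+
  then show ?thesis using assms(3) po_total[of x y] internal_valid by (auto simp: precedes_iff)
qed

lemma dup_min:
  assumes rel: "relaxed T ptr"
  shows "is_internal T u \<Longrightarrow> precedes T u v \<Longrightarrow> Btree T ptr u a \<Longrightarrow> Btree T ptr v a \<Longrightarrow>
    \<exists>u' v'. is_internal T u' \<and> is_internal T v' \<and> precedes T u' v' \<and>
      lchild T ptr u' = lchild T ptr v' \<and> rchild T ptr u' = rchild T ptr v'"
proof (induction v arbitrary: u a rule: wf_induct_rule[OF wf_prec[of T]])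
  case (1 v)
  show ?case
  proof (cases "\<exists>x y c. precedes T x y \<and> precedes T y v \<and> is_internal T x \<and> Btree T ptr x c \<and> Btree T ptr y c")
    case True
    then obtain x y c where "precedes T x y" "precedes T y v" "is_internal T x" "Btree T ptr x c" "Btree T ptr y c"
      by blast
    then show ?thesis using 1(1) by blast
  next
    case False
    have uv: "u \<noteq> v" using 1(3) precedes_irrefl by metis
    obtain a1 a2 where a: "a = Node a1 a2"
      using 1(4,5) uv B_Leaf_inv by (cases a) metis+
    have iu: "is_internal T u" and lu: "Btree T ptr (lchild T ptr u) a1" and ru: "Btree T ptr (rchild T ptr u) a2"
      using B_Node_inv 1(4) a by metis+
    have iv: "is_internal T v" and lv: "Btree T ptr (lchild T ptr v) a1" and rv: "Btree T ptr (rchild T ptr v) a2"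
      using B_Node_inv 1(5) a by metis+
    have eq: "child T ptr u b = child T ptr v b" if bu: "Btree T ptr (child T ptr u b) c"
      and bv: "Btree T ptr (child T ptr v b) c" for b c
    proof (rule ccontr)
      assume ne: "child T ptr u b \<noteq> child T ptr v b"
      have pu: "precedes T (child T ptr u b) v"
        using child_facts[OF rel iu, of b] 1(3) precedes_trans by blast
      have pv: "precedes T (child T ptr v b) v"
        using child_facts[OF rel iv, of b] by blast
      from sameB[OF bu bv ne] pu pv False bu bv show False by blast
    qed
    have "lchild T ptr u = lchild T ptr v" using eq lu lv by blast
    moreover have "rchild T ptr u = rchild T ptr v" using eq ru rv by blast
    ultimately show ?thesis using iu iv 1(3) by blast
  qed
qed

lemma cherry_arg:
  assumes rel: "relaxed T ptr" and iu: "is_internal T u" and iv: "is_internal T v"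
    and p: "precedes T u v" and l: "lchild T ptr u = lchild T ptr v" and r: "rchild T ptr u = rchild T ptr v"
  shows "cherry T v"
proof -
  have uv: "u \<noteq> v" using p precedes_irrefl by metis
  have pou: "po (u@[b]) u" for b using po_append[of "[b]" u] by simp
  have A: "\<not> is_vertex T (v@[False])"
  proof
    assume vl: "is_vertex T (v@[False])"
    then have lv: "lchild T ptr v = v@[False]" by (simp add: child_def)
    from child_cases[OF rel iu, of False] uv l lv
    have "precedes T (v@[False]) (u@[False])" by auto
    then have "po (v@[False]) u" using pou po_trans by (auto simp: precedes_iff)
    moreover have "po u v" using p by (simp add: precedes_iff)
    ultimately obtain q where q: "u = v@True#q" using po_L3 by blast
    have ivr: "is_internal T (v@[True])"
    proof (cases q)
      case Nil then show ?thesis using iu q by simp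
    next
      case (Cons c q')
      then show ?thesis using internal_valid[OF iu] q prefix_internal[of T "v@[True]" q] by simp
    qed
    then have rv: "rchild T ptr v = v@[True]" by (simp add: child_def is_vertex_def)
    from child_cases[OF rel iu, of True] uv r rv
    have "precedes T (v@[True]) (u@[True])" by auto
    then have pvr: "po (v@[True]) u" using pou po_trans by (auto simp: precedes_iff)
    show False
    proof (cases q)
      case Nil then show ?thesis using q pvr po_irrefl by simp
    next
      case (Cons c q')
      then have "po u (v@[True])" using q po_append[of "c#q'" "v@[True]"] by simp
      then show ?thesis using pvr po_trans po_irrefl by blast
    qed
  qed
  have B: "\<not> is_vertex T (v@[True])"
  proof
    assume vr: "is_vertex T (v@[True])"
    then have rv: "rchild T ptr v = v@[True]" by (simp add: child_def)
    from child_cases[OF rel iu, of True] uv r rv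
    have "precedes T (v@[True]) (u@[True])" by auto
    then have "po (v@[True]) u" using pou po_trans by (auto simp: precedes_iff)
    moreover have "po u v" using p by (simp add: precedes_iff)
    ultimately show False using po_L4 by blast
  qed
  have "subt T (v@[False]) = Some Leaf" "subt T (v@[True]) = Some Leaf"
    using A B valid_not_internal_leaf internal_valid_child[OF iv] by (auto simp: is_vertex_def)
  moreover obtain l0 r0 where "subt T v = Some (Node l0 r0)" using iv by (auto simp: is_internal_def)
  ultimately show ?thesis using A B by (auto simp: cherry_def is_vertex_def subt_append)
qed

theorem proposition2p8:
  assumes "relaxed T ptr"
  shows "(compacted T ptr \<longleftrightarrow>
            \<not> (\<exists>u v. is_internal T u \<and> is_internal T v \<and> u \<noteq> v \<and>
                   lchild T ptr u = lchild T ptr v \<and> rchild T ptr u = rchild T ptr v))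
       \<and> (\<not> compacted T ptr \<longrightarrow>
            (\<exists>u v. is_internal T u \<and> is_internal T v \<and> u \<noteq> v \<and>
                   lchild T ptr u = lchild T ptr v \<and> rchild T ptr u = rchild T ptr v \<and>
                   cherry T v \<and> precedes T u v))"
proof -
  have second: "\<exists>u v. is_internal T u \<and> is_internal T v \<and> u \<noteq> v \<and>
                   lchild T ptr u = lchild T ptr v \<and> rchild T ptr u = rchild T ptr v \<and>
                   cherry T v \<and> precedes T u v" if nc: "\<not> compacted T ptr"
  proof -
    obtain x y a where xy: "is_vertex T x" "is_vertex T y" "x \<noteq> y" "Btree T ptr x a" "Btree T ptr y a"
      using nc assms by (auto simp: compacted_def)
    from sameB[OF xy(4,5,3)] obtain u v where
      uv: "is_internal T u" "precedes T u v" "Btree T ptr u a" "Btree T ptr v a" using xy by blast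
    from dup_min[OF assms uv] obtain u' v' where
      h: "is_internal T u'" "is_internal T v'" "precedes T u' v'"
      "lchild T ptr u' = lchild T ptr v'" "rchild T ptr u' = rchild T ptr v'" by blast
    have "cherry T v'" using cherry_arg[OF assms h] .
    moreover have "u' \<noteq> v'" using h(3) precedes_irrefl by metis
    ultimately show ?thesis using h by blast
  qed
  have first: "\<not> compacted T ptr" if H: "is_internal T u" "is_internal T v" "u \<noteq> v"
    "lchild T ptr u = lchild T ptr v" "rchild T ptr u = rchild T ptr v" for u v
  proof -
    obtain a where a: "Btree T ptr (lchild T ptr u) a"
      using B_total[OF assms] child_facts[OF assms H(1)] by blast
    obtain b where b: "Btree T ptr (rchild T ptr u) b"
      using B_total[OF assms] child_facts[OF assms H(1)] by blast
    have "Btree T ptr u (Node a b)" using Btree.B_node[OF H(1) a b] .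
    moreover have "Btree T ptr v (Node a b)" using Btree.B_node[OF H(2)] a b H(4,5) by simp
    ultimately show ?thesis using H by (auto simp: compacted_def is_vertex_def)
  qed
  show ?thesis using first second by blast
qed

end
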